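(* Let $\lambda>0$, $\xi>0$, and real velocities $v_2<v_1$ with either $v_2<0<v_1$ or $0<v_2<v_1$. Let $\{(\tilde X(t),V(t)),\,t\ge0\}$ be the extended telegraph process driven by geometric counting processes with parameter $\lambda$ and subject to Poissonian resets to the origin with rate $\xi$ (as described in the context), started at $\tilde X(0)=0$, $V(0)=v_j$. Then for all $t>0$ and $v_2t<x<v_1t$, for $j=1,2$, the (generalized) sub-densities satisfy $$ \begin{aligned} \tilde p_j(x,t\,|\,v_j)&=\frac{e^{-\xi t}\,\delta(x-v_jt)}{1+\lambda t}+\mathbb{1}_{\{v_2t<x<v_1t\}}\frac{e^{-\xi t}\lambda^2\tau^{2-j}(t-\tau)^{j-1}}{(v_1-v_2)(1+\lambda t)^2} +\mathrm{sgn}(v_j)\,\mathbb{1}_{\{0<\frac{x}{v_j}<t\}}\frac{\xi e^{-\xi x/v_j}}{v_j+\lambda x}\\ &\quad+\boldsymbol I(x,t)\Bigg[(-1)^{3-j}\frac{\xi(v_{3-j}+\lambda x)}{(v_1-v_2)^2}\,\Theta_\lambda^\xi(x,t)+(-1)^j\frac{\xi e^{\xi/\lambda}}{(v_1-v_2)^2}\Big(\frac{v_{3-j}(\lambda+\xi)}{\lambda}+x\xi\Big)\Gamma_\lambda^\xi(x,t)\Bigg], \end{aligned} $$ $$ \begin{aligned} \tilde p_{3-j}(x,t\,|\,v_j)&=\mathbb{1}_{\{v_2t<x<v_1t\}}\frac{e^{-\xi t}\lambda\big[1+\lambda\tau^{j-1}(t-\tau)^{2-j}\big]}{(v_1-v_2)(1+\lambda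 t)^2} +\boldsymbol I(x,t)\Bigg[(-1)^j\frac{\xi(v_{3-j}+\lambda x)}{(v_1-v_2)^2}\,\Theta_\lambda^\xi(x,t)\\ &\quad+(-1)^{3-j}\frac{\xi e^{\xi/\lambda}}{(v_1-v_2)^2}\Big(\frac{v_j(\lambda+\xi)}{\lambda}+x\xi+(-1)^j\frac{\xi(v_1-v_2)}{\lambda}\Big)\Gamma_\lambda^\xi(x,t)\Bigg]. \end{aligned} $$
   Context: Geometric counting process (GCP) with intensity $\lambda>0$: a counting process $\tilde N_\lambda$ with $\tilde N_\lambda(0)=0$ obtained as a Poisson process whose rate is random and exponentially distributed with mean $\lambda$; its increments satisfy $P\{\tilde N_\lambda(t+s)-\tilde N_\lambda(t)=k\}=\frac{1}{1+\lambda s}\big(\frac{\lambda s}{1+\lambda s}\big)^k$, $k\ge0$, and each inter-event time has marginal density $\lambda/(1+\lambda t)^2$, $t\ge0$. The process without resets $(X(t),V(t))$: a particle starts at $X(0)=0$ with velocity $V(0)=v_j\in\{v_1,v_2\}$ ($v_1,v_2\neq 0$, $v_2<v_1$) and moves on $\mathbb R$ with velocity alternating between $v_1$ and $v_2$, $X(t)=\int_0^tV(s)\,ds$; the numbers of periods spent with velocity $v_1$ and with velocity $v_2$ are governed by two independent GCPs each of intensity $\lambda$. Its generalized sub-densities $p_i(x,t\,|\,v_j)=P[X(t)\in dx,V(t)=v_i\,|\,X(0)=0,V(0)=v_j]/dx$ are, for $t>0$, $p_i(x,t|v_j)=\mathbb 1_{\{i=j\}}\frac{\delta(x-v_jt)}{1+\lambda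 t}+\mathbb 1_{\{v_2t<x<v_1t\}}\frac{\lambda c_{i,j}}{(v_1-v_2)(1+\lambda t)^2}$ with $c_{1,1}=\lambda\tau$, $c_{1,2}=1+\lambda\tau$, $c_{2,1}=1+\lambda(t-\tau)$, $c_{2,2}=\lambda(t-\tau)$, where $\tau=\tau(x,t)=\frac{x-v_2t}{v_1-v_2}$. The reset process $(\tilde X(t),V(t))$: same dynamics, but the particle is instantaneously reset to the origin at the epochs of an independent Poisson process of rate $\xi>0$, after which it restarts afresh with the initial velocity $v_j$. Its generalized sub-densities $\tilde p_i(x,t|v_j)\,dx=P[\tilde X(t)\in dx,V(t)=v_i\,|\,\tilde X(0)=0,V(0)=v_j]$ satisfy $\tilde p_i(x,t|v_j)=e^{-\xi t}p_i(x,t|v_j)+\xi\int_0^te^{-\xi s}p_i(x,s|v_j)\,ds$. Discrete components are written with the Dirac delta $\delta$. Notation: $M_x=\max\{x/v_1,x/v_2\}$, $m_{x,t}=\min\{x/v_2,t\}$; $\Gamma(a,z_0,z_1)=\int_{z_0}^{z_1}s^{a-1}e^{-s}ds$ (generalized incomplete gamma function); $\Gamma_\lambda^\xi(x,t)=\Gamma[0,(M_x+\frac1\lambda)\xi,(t+\frac1\lambda)\xi]$ if $v_2<0<v_1$ and $\Gamma[0,(\frac{x}{v_1}+\frac1\lambda)\xi,(m_{x,t}+\frac1\lambda)\xi]$ if $0<v_2<v_1$; $\boldsymbol I(x,t)=\mathbb 1_{\{\min\{v_2t,0\}<x<v_1t\}}$; $\Theta_\lambda^\xi(x,t)=\frac{e^{-\xi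 M_x}}{1+\lambda M_x}-\frac{e^{-\xi t}}{1+\lambda t}$ if $v_2<0<v_1$, and $\frac{e^{-\xi x/v_1}}{1+\lambda x/v_1}-\frac{e^{-\xi m_{x,t}}}{1+\lambda m_{x,t}}$ if $0<v_2<v_1$; $\mathrm{sgn}$ is the sign function; $\mathbb 1_A$ is the indicator of $A$. *)

theory Defs
  imports "HOL-Analysis.Analysis"
begin

definition vel :: "real \<Rightarrow> real \<Rightarrow> nat \<Rightarrow> real" where
  "vel v1 v2 i = (if i = 1 then v1 else v2)"

definition tau :: "real \<Rightarrow> real \<Rightarrow> real \<Rightarrow> real \<Rightarrow> real" where
  "tau v1 v2 x t = (x - v2 * t) / (v1 - v2)"

text \<open>Coefficients c_{i,j} of the absolutely continuous part of p_i(x,t|v_j).\<close>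
definition coef :: "real \<Rightarrow> real \<Rightarrow> real \<Rightarrow> nat \<Rightarrow> nat \<Rightarrow> real \<Rightarrow> real \<Rightarrow> real" where
  "coef lam v1 v2 i j x t =
     (let \<tau> = tau v1 v2 x t in
      if i = 1 \<and> j = 1 then lam * \<tau>
      else if i = 1 \<and> j = 2 then 1 + lam * \<tau>
      else if i = 2 \<and> j = 1 then 1 + lam * (t - \<tau>)
      else lam * (t - \<tau>))"

text \<open>Generalized sub-density p_i(.,s|v_j) of the process without resets, as a
  set function on Borel sets: the Dirac component integrates to an indicator.\<close>
definition subP :: "real \<Rightarrow> real \<Rightarrow> real \<Rightarrow> nat \<Rightarrow> nat \<Rightarrow> real \<Rightarrow> real set \<Rightarrow> real" where
  "subP lam v1 v2 i j s A =
     (if i = j then indicator A (vel v1 v2 j * s) / (1 + lam * s) else 0)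
     + (\<integral>x\<in>A \<inter> {v2 * s<..<v1 * s}.
          lam * coef lam v1 v2 i j x s / ((v1 - v2) * (1 + lam * s)^2) \<partial>lborel)"

text \<open>Generalized sub-density of the reset process (renewal formula).\<close>
definition subP_reset :: "real \<Rightarrow> real \<Rightarrow> real \<Rightarrow> real \<Rightarrow> nat \<Rightarrow> nat \<Rightarrow> real \<Rightarrow> real set \<Rightarrow> real" where
  "subP_reset lam xi v1 v2 i j t A =
     exp (- xi * t) * subP lam v1 v2 i j t A
     + xi * (LBINT s=0..t. exp (- xi * s) * subP lam v1 v2 i j s A)"

definition GammaInc :: "real \<Rightarrow> real \<Rightarrow> real \<Rightarrow> real" where
  "GammaInc a z0 z1 = (LBINT s=z0..z1. s powr (a - 1) * exp (- s))"

definition Mx :: "real \<Rightarrow> real \<Rightarrow> real \<Rightarrow> real" where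
  "Mx v1 v2 x = max (x / v1) (x / v2)"

definition mxt :: "real \<Rightarrow> real \<Rightarrow> real \<Rightarrow> real" where
  "mxt v2 x t = min (x / v2) t"

definition GammaLX :: "real \<Rightarrow> real \<Rightarrow> real \<Rightarrow> real \<Rightarrow> real \<Rightarrow> real \<Rightarrow> real" where
  "GammaLX lam xi v1 v2 x t =
     (if v2 < 0 then GammaInc 0 ((Mx v1 v2 x + 1 / lam) * xi) ((t + 1 / lam) * xi)
      else GammaInc 0 ((x / v1 + 1 / lam) * xi) ((mxt v2 x t + 1 / lam) * xi))"

definition ThetaLX :: "real \<Rightarrow> real \<Rightarrow> real \<Rightarrow> real \<Rightarrow> real \<Rightarrow> real \<Rightarrow> real" where
  "ThetaLX lam xi v1 v2 x t =
     (if v2 < 0 then exp (- xi * Mx v1 v2 x) / (1 + lam * Mx v1 v2 x) - exp (- xi * t) / (1 + lam * t)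
      else exp (- xi * (x / v1)) / (1 + lam * (x / v1))
           - exp (- xi * mxt v2 x t) / (1 + lam * mxt v2 x t))"

definition Ind :: "real \<Rightarrow> real \<Rightarrow> real \<Rightarrow> real \<Rightarrow> real" where
  "Ind v1 v2 x t = indicator {min (v2 * t) 0 <..< v1 * t} x"

text \<open>Absolutely continuous part of tilde p_j(x,t|v_j).\<close>
definition dens_same :: "real \<Rightarrow> real \<Rightarrow> real \<Rightarrow> real \<Rightarrow> nat \<Rightarrow> real \<Rightarrow> real \<Rightarrow> real" where
  "dens_same lam xi v1 v2 j t x =
     (let vj = vel v1 v2 j; vk = vel v1 v2 (3 - j); \<tau> = tau v1 v2 x t in
       indicator {v2 * t<..<v1 * t} x * exp (- xi * t) * lam^2 * \<tau> ^ (2 - j) * (t - \<tau>) ^ (j - 1)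
         / ((v1 - v2) * (1 + lam * t)^2)
     + sgn vj * indicator {0<..<t} (x / vj) * xi * exp (- xi * x / vj) / (vj + lam * x)
     + Ind v1 v2 x t *
        ((-1) ^ (3 - j) * xi * (vk + lam * x) / (v1 - v2)^2 * ThetaLX lam xi v1 v2 x t
         + (-1) ^ j * xi * exp (xi / lam) / (v1 - v2)^2 * (vk * (lam + xi) / lam + x * xi)
             * GammaLX lam xi v1 v2 x t))"

text \<open>Absolutely continuous part of tilde p_{3-j}(x,t|v_j) (no discrete part).\<close>
definition dens_other :: "real \<Rightarrow> real \<Rightarrow> real \<Rightarrow> real \<Rightarrow> nat \<Rightarrow> real \<Rightarrow> real \<Rightarrow> real" where
  "dens_other lam xi v1 v2 j t x =
     (let vj = vel v1 v2 j; vk = vel v1 v2 (3 - j); \<tau> = tau v1 v2 x t in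
       indicator {v2 * t<..<v1 * t} x * exp (- xi * t) * lam
         * (1 + lam * \<tau> ^ (j - 1) * (t - \<tau>) ^ (2 - j)) / ((v1 - v2) * (1 + lam * t)^2)
     + Ind v1 v2 x t *
        ((-1) ^ j * xi * (vk + lam * x) / (v1 - v2)^2 * ThetaLX lam xi v1 v2 x t
         + (-1) ^ (3 - j) * xi * exp (xi / lam) / (v1 - v2)^2
             * (vj * (lam + xi) / lam + x * xi + (-1) ^ j * xi * (v1 - v2) / lam)
             * GammaLX lam xi v1 v2 x t))"

end

theory Submission
  imports Defs
begin
lemma E_deriv:
  fixes lam xi s :: real
  assumes "1 + lam * s > 0"
  shows "((\<lambda>s. exp (- xi * s) / (1 + lam * s)) has_real_derivative
           (- xi * exp (- xi * s) / (1 + lam * s) - lam * exp (- xi * s) / (1 + lam * s)^2)) (at s within S)"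
proof -
  have ne: "1 + lam * s \<noteq> 0" using assms by simp
  show ?thesis
    apply (rule derivative_eq_intros refl | simp add: ne)+
    using ne by (simp add: divide_simps) (simp add: algebra_simps power2_eq_square)
qed
lemma gamma_subst:
  fixes lam xi L U :: real
  assumes lam: "lam > 0" and xi: "xi > 0" and L: "0 \<le> L" "L \<le> U"
  shows "(LBINT s=L..U. exp (- xi * s) / (1 + lam * s))
        = exp (xi / lam) / lam * GammaInc 0 ((L + 1 / lam) * xi) ((U + 1 / lam) * xi)"
proof -
  let ?g = "\<lambda>s. (s + 1 / lam) * xi"
  let ?f = "\<lambda>w::real. w powr (0 - 1) * exp (- w)"
  have "(LBINT s=L..U. (\<lambda>_. xi) s *\<^sub>R ?f (?g s)) = (LBINT y=?g L..?g U. ?f y)"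
  proof (rule interval_integral_substitution_finite[OF L(2)])
    show "\<And>x. L \<le> x \<Longrightarrow> x \<le> U \<Longrightarrow> (?g has_real_derivative xi) (at x within {L..U})"
      by (auto intro!: derivative_eq_intros)
    show "continuous_on (?g ` {L..U}) ?f"
    proof (rule continuous_on_subset[of "{0<..}"])
      show "continuous_on {0<..} ?f"
        by (auto intro!: continuous_intros)
      show "?g ` {L..U} \<subseteq> {0<..}" using L lam xi
        by (auto intro!: mult_pos_pos add_nonneg_pos)
    qed
    show "continuous_on {L..U} (\<lambda>_. xi)" by (rule continuous_on_const)
  qed
  also have "\<dots> = GammaInc 0 ((L + 1 / lam) * xi) ((U + 1 / lam) * xi)"
    by (simp add: GammaInc_def)
  finally have eq: "(LBINT s=L..U. xi * ?f (?g s)) = GammaInc 0 ((L + 1 / lam) * xi) ((U + 1 / lam) * xi)"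
    by simp
  have "(LBINT s=L..U. xi * ?f (?g s)) = (LBINT s=L..U. lam * exp (- xi / lam) * (exp (- xi * s) / (1 + lam * s)))"
  proof (rule interval_integral_cong)
    fix s assume "s \<in> einterval (min (ereal L) (ereal U)) (max (ereal L) (ereal U))"
    then have s: "s \<ge> 0" using L by (auto simp: min_def max_def)
    have pos: "(s + 1 / lam) * xi > 0" using s lam xi by (auto intro!: mult_pos_pos add_nonneg_pos)
    have "exp (- ((s + 1 / lam) * xi)) = exp (- xi / lam) * exp (- xi * s)"
      by (simp add: exp_add[symmetric] algebra_simps diff_divide_distrib)
    moreover have "((s + 1 / lam) * xi) powr (0 - 1) = 1 / ((s + 1 / lam) * xi)"
      using pos by (simp add: powr_minus_divide)
    moreover have "(s + 1 / lam) * xi = xi * (1 + lam * s) / lam" using lam by (simp add: field_simps)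
    moreover have "1 + lam * s > 0" using lam s by (simp add: add_pos_nonneg)
    ultimately show "xi * ?f (?g s) = lam * exp (- xi / lam) * (exp (- xi * s) / (1 + lam * s))"
      using lam xi s by simp
  qed
  also have "\<dots> = lam * exp (- xi / lam) * (LBINT s=L..U. exp (- xi * s) / (1 + lam * s))"
    by (rule interval_lebesgue_integral_mult_right)
  finally have "lam * exp (- xi / lam) * (LBINT s=L..U. exp (- xi * s) / (1 + lam * s)) = GammaInc 0 ((L + 1 / lam) * xi) ((U + 1 / lam) * xi)"
    using eq by simp
  then show ?thesis using lam
    by (simp add: field_simps exp_minus)
qed

lemma closed_form:
  fixes lam xi L U a b :: real
  assumes lam: "lam > 0" and xi: "xi > 0" and L: "0 \<le> L" "L \<le> U"
  shows "(LBINT s=L..U. exp (- xi * s) * (a + b * s) / (1 + lam * s)^2)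
     = (a - b / lam) / lam * (exp (- xi * L) / (1 + lam * L) - exp (- xi * U) / (1 + lam * U))
       + (b / lam - (a - b / lam) * xi / lam)
         * (exp (xi / lam) / lam * GammaInc 0 ((L + 1 / lam) * xi) ((U + 1 / lam) * xi))"
proof -
  define P where "P = (a - b / lam) / lam"
  define K where "K = b / lam - (a - b / lam) * xi / lam"
  define E where "E = (\<lambda>s::real. exp (- xi * s) / (1 + lam * s))"
  define f where "f = (\<lambda>s::real. exp (- xi * s) * (a + b * s) / (1 + lam * s)^2)"
  have upos: "1 + lam * s > 0" if "L \<le> s" for s using that L lam
    by (simp add: add_pos_nonneg)
  have cont: "continuous_on {L..U} f" "continuous_on {L..U} E"
    unfolding f_def E_def using upos by (auto intro!: continuous_intros simp: less_imp_neq[symmetric])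
  have int1: "interval_lebesgue_integrable lborel L U (\<lambda>s. f s - K * E s)"
    by (rule interval_integrable_continuous_on[OF L(2)]) (auto intro!: continuous_intros cont)
  have int2: "interval_lebesgue_integrable lborel L U (\<lambda>s. K * E s)"
    by (rule interval_integrable_continuous_on[OF L(2)]) (auto intro!: continuous_intros cont)
  have ftc: "(LBINT s=L..U. f s - K * E s) = (- P * E U) - (- P * E L)"
  proof (rule interval_integral_FTC_finite)
    show "continuous_on {min L U..max L U} (\<lambda>s. f s - K * E s)"
      using L by (auto intro!: continuous_intros cont simp: min_def max_def)
    fix s assume s: "min L U \<le> s" "s \<le> max L U"
    then have sL: "L \<le> s" using L by (simp add: min_def)
    have u: "1 + lam * s > 0" using upos[OF sL] .
    have d: "((\<lambda>s. - P * E s) has_real_derivative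
        (- P * (- xi * exp (- xi * s) / (1 + lam * s) - lam * exp (- xi * s) / (1 + lam * s)^2)))
        (at s within {min L U..max L U})"
      unfolding E_def by (intro DERIV_cmult E_deriv u)
    have eq: "- P * (- xi * exp (- xi * s) / (1 + lam * s) - lam * exp (- xi * s) / (1 + lam * s)^2)
        = f s - K * E s"
      unfolding P_def K_def f_def E_def using u lam
      by (simp add: divide_simps less_imp_neq[symmetric]) (simp add: algebra_simps power2_eq_square)
    show "((\<lambda>s. - P * E s) has_vector_derivative f s - K * E s) (at s within {min L U..max L U})"
      using d unfolding eq has_real_derivative_iff_has_vector_derivative .
  qed
  have "(LBINT s=L..U. f s) = (LBINT s=L..U. (f s - K * E s) + K * E s)" by simp
  also have "\<dots> = (LBINT s=L..U. f s - K * E s) + (LBINT s=L..U. K * E s)"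
    by (rule interval_lebesgue_integral_add(2)[OF int1 int2])
  also have "\<dots> = (LBINT s=L..U. f s - K * E s) + K * (LBINT s=L..U. E s)"
    by (simp only: interval_lebesgue_integral_mult_right)
  also have "\<dots> = P * (E L - E U) + K * (exp (xi / lam) / lam * GammaInc 0 ((L + 1 / lam) * xi) ((U + 1 / lam) * xi))"
    using ftc gamma_subst[OF lam xi L] unfolding E_def by (simp add: algebra_simps)
  finally show ?thesis unfolding f_def P_def K_def E_def by simp
qed

definition FF :: "real \<Rightarrow> real \<Rightarrow> real \<Rightarrow> nat \<Rightarrow> nat \<Rightarrow> real \<Rightarrow> real \<Rightarrow> real" where
  "FF lam v1 v2 i j x s = lam * coef lam v1 v2 i j x s / ((v1 - v2) * (1 + lam * s)^2)"

definition HH :: "real \<Rightarrow> real \<Rightarrow> real \<Rightarrow> real \<Rightarrow> nat \<Rightarrow> nat \<Rightarrow> real \<Rightarrow> real \<Rightarrow> real \<Rightarrow> real" where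
  "HH lam xi v1 v2 i j t x s = indicator {0<..<t} s * (exp (- xi * s) * (indicator {v2 * s <..< v1 * s} x * FF lam v1 v2 i j x s))"

lemma FF_meas[measurable (raw)]:
  assumes [measurable]: "f \<in> borel_measurable M" "g \<in> borel_measurable M"
  shows "(\<lambda>p. FF lam v1 v2 i j (f p) (g p)) \<in> borel_measurable M"
  unfolding FF_def coef_def tau_def Let_def by measurable

lemma HH_meas[measurable (raw)]:
  assumes [measurable]: "f \<in> borel_measurable M" "g \<in> borel_measurable M"
  shows "(\<lambda>p. HH lam xi v1 v2 i j t (f p) (g p)) \<in> borel_measurable M"
  unfolding HH_def indicator_def greaterThanLessThan_iff mem_Collect_eq by measurable

lemma HH_meas2: "(\<lambda>p::real\<times>real. HH lam xi v1 v2 i j t (fst p) (snd p)) \<in> borel_measurable (lborel \<Otimes>\<^sub>M lborel)"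
  by measurable

lemma HH_meas3: "(\<lambda>x. HH lam xi v1 v2 i j t x s) \<in> borel_measurable lborel"
  by measurable

lemma coef_bound:
  assumes "lam > 0" "v2 < v1" "s \<ge> 0" "v2 * s < x" "x < v1 * s"
  shows "0 \<le> coef lam v1 v2 i j x s \<and> coef lam v1 v2 i j x s \<le> 1 + lam * s"
proof -
  have d: "v1 - v2 > 0" using assms by simp
  have t0: "tau v1 v2 x s > 0" unfolding tau_def using assms d by (simp add: divide_pos_pos)
  have t1: "s - tau v1 v2 x s > 0" unfolding tau_def using assms d
    by (simp add: field_simps)
  have "tau v1 v2 x s \<le> s" "s - tau v1 v2 x s \<le> s" using t0 t1 by linarith+
  then have "lam * tau v1 v2 x s \<le> lam * s" "lam * (s - tau v1 v2 x s) \<le> lam * s"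
    using assms(1) by (simp_all add: mult_left_mono)
  moreover have "lam * tau v1 v2 x s \<ge> 0" "lam * (s - tau v1 v2 x s) \<ge> 0"
    using t0 t1 assms(1) by simp_all
  ultimately show ?thesis unfolding coef_def Let_def
    by auto
qed

lemma FF_bound:
  assumes "lam > 0" "v2 < v1" "s \<ge> 0" "v2 * s < x" "x < v1 * s"
  shows "0 \<le> FF lam v1 v2 i j x s \<and> FF lam v1 v2 i j x s \<le> lam / (v1 - v2)"
proof -
  have c: "0 \<le> coef lam v1 v2 i j x s" "coef lam v1 v2 i j x s \<le> 1 + lam * s"
    using coef_bound[OF assms] by auto
  have u: "1 + lam * s \<ge> 1" using assms by simp
  have d: "v1 - v2 > 0" using assms by simp
  have "coef lam v1 v2 i j x s \<le> (1 + lam * s)^2"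
  proof -
    have "1 + lam * s \<le> (1 + lam * s) * (1 + lam * s)" using u by simp
    then show ?thesis using c(2) by (simp add: power2_eq_square)
  qed
  then have "coef lam v1 v2 i j x s / (1 + lam * s)^2 \<le> 1"
    using u by simp
  then have "lam * (coef lam v1 v2 i j x s / (1 + lam * s)^2) \<le> lam"
    using mult_left_mono[of "coef lam v1 v2 i j x s / (1 + lam * s)^2" 1 lam] assms(1) by simp
  then have "lam * (coef lam v1 v2 i j x s / (1 + lam * s)^2) / (v1 - v2) \<le> lam / (v1 - v2)"
    by (rule divide_right_mono) (use d in simp)
  moreover have "lam * (coef lam v1 v2 i j x s / (1 + lam * s)^2) / (v1 - v2) = FF lam v1 v2 i j x s"
    unfolding FF_def by simp
  moreover have "FF lam v1 v2 i j x s \<ge> 0" unfolding FF_def using c assms d by simp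
  ultimately show ?thesis by simp
qed

definition KK :: "real \<Rightarrow> real \<Rightarrow> real \<Rightarrow> real \<Rightarrow> real \<Rightarrow> real" where
  "KK lam xi v t x = indicator {0<..<t} (x / v) * exp (- xi * x / v) * sgn v / (v + lam * x)"

definition D1 :: "real \<Rightarrow> real \<Rightarrow> real \<Rightarrow> real \<Rightarrow> real set \<Rightarrow> real \<Rightarrow> real" where
  "D1 lam xi v t A s = indicator {0<..<t} s * (exp (- xi * s) * (indicator A (v * s) / (1 + lam * s)))"

context
  fixes lam xi v1 v2 t :: real and i j :: nat and A :: "real set"
  assumes lam: "lam > 0" and xi: "xi > 0" and v: "v2 < v1" and v1: "0 < v1" and t: "t > 0"
    and A[measurable]: "A \<in> sets borel"
begin

lemma HH_bound:
  "\<bar>indicator A x * HH lam xi v1 v2 i j t x s\<bar>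
     \<le> lam / (v1 - v2) * indicator ({- ((\<bar>v1\<bar> + \<bar>v2\<bar>) * t)..(\<bar>v1\<bar> + \<bar>v2\<bar>) * t} \<times> {0..t}) (x, s)"
proof (cases "0 < s \<and> s < t \<and> v2 * s < x \<and> x < v1 * s")
  case True
  then have s: "s \<ge> 0" by simp
  have F: "0 \<le> FF lam v1 v2 i j x s" "FF lam v1 v2 i j x s \<le> lam / (v1 - v2)"
    using FF_bound[OF lam v s] True by auto
  have e: "exp (- xi * s) \<le> 1" "exp (- xi * s) > 0" using xi s by auto
  have "\<bar>x\<bar> \<le> (\<bar>v1\<bar> + \<bar>v2\<bar>) * t"
  proof -
    have a1: "v1 * s \<le> \<bar>v1\<bar> * s" using s by (simp add: mult_right_mono)
    have "- \<bar>v2\<bar> \<le> v2" by simp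
    from mult_right_mono[OF this s] have a2: "- (\<bar>v2\<bar> * s) \<le> v2 * s" by simp
    have a3: "\<bar>v1\<bar> * s \<ge> 0" "\<bar>v2\<bar> * s \<ge> 0" using s by simp_all
    have "\<bar>x\<bar> \<le> \<bar>v1\<bar> * s + \<bar>v2\<bar> * s" unfolding abs_le_iff using True a1 a2 a3
      by linarith
    also have "\<dots> \<le> (\<bar>v1\<bar> + \<bar>v2\<bar>) * t" using True
      by (simp add: distrib_right[symmetric] mult_left_mono)
    finally show ?thesis .
  qed
  then have ind: "indicator ({- ((\<bar>v1\<bar> + \<bar>v2\<bar>) * t)..(\<bar>v1\<bar> + \<bar>v2\<bar>) * t} \<times> {0..t}) (x, s) = (1::real)"
    using True by (auto simp: indicator_def abs_le_iff)
  have "\<bar>indicator A x * HH lam xi v1 v2 i j t x s\<bar> \<le> exp (- xi * s) * FF lam v1 v2 i j x s"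
    unfolding HH_def using True F e by (auto simp: indicator_def)
  also have "\<dots> \<le> 1 * (lam / (v1 - v2))"
    using F e by (intro mult_mono) auto
  finally show ?thesis using ind by simp
next
  case False
  then have "HH lam xi v1 v2 i j t x s = 0" unfolding HH_def by (auto simp: indicator_def)
  then show ?thesis using lam v by (simp add: indicator_def)
qed

lemma G_int: "integrable (lborel \<Otimes>\<^sub>M lborel) (\<lambda>(x, s). indicator A x * HH lam xi v1 v2 i j t x s)"
proof -
  define B where "B = {- ((\<bar>v1\<bar> + \<bar>v2\<bar>) * t)..(\<bar>v1\<bar> + \<bar>v2\<bar>) * t} \<times> {0..t}"
  have "emeasure (lborel \<Otimes>\<^sub>M lborel) B = emeasure lborel {- ((\<bar>v1\<bar> + \<bar>v2\<bar>) * t)..(\<bar>v1\<bar> + \<bar>v2\<bar>) * t} * emeasure lborel {0..t}"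
    unfolding B_def by (rule lborel.emeasure_pair_measure_Times) auto
  also have "\<dots> < \<infinity>"
  proof -
    have "(\<bar>v1\<bar> + \<bar>v2\<bar>) * t \<ge> 0" using t by simp
    then show ?thesis using t by (simp add: ennreal_mult_less_top)
  qed
  finally have fin: "emeasure (lborel \<Otimes>\<^sub>M lborel) B < \<infinity>" .
  have Bm: "B \<in> sets (lborel \<Otimes>\<^sub>M lborel)" unfolding B_def by auto
  have i1: "integrable (lborel \<Otimes>\<^sub>M lborel) (\<lambda>p. lam / (v1 - v2) * indicator B p)"
    using fin Bm by (intro integrable_mult_right integrable_real_indicator) auto
  have m: "(\<lambda>(x, s). indicator A x * HH lam xi v1 v2 i j t x s) \<in> borel_measurable (lborel \<Otimes>\<^sub>M lborel)"
    by measurable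
  have ae: "AE p in lborel \<Otimes>\<^sub>M lborel. norm ((\<lambda>(x, s). indicator A x * HH lam xi v1 v2 i j t x s) p)
          \<le> norm (lam / (v1 - v2) * indicator B p)"
  proof (rule AE_I2)
    fix p :: "real \<times> real"
    obtain x s where p: "p = (x, s)" by fastforce
    show "norm ((\<lambda>(x, s). indicator A x * HH lam xi v1 v2 i j t x s) p) \<le> norm (lam / (v1 - v2) * indicator B p)"
      using HH_bound[of x s] lam v unfolding p B_def by (simp add: abs_mult)
  qed
  show ?thesis by (rule Bochner_Integration.integrable_bound[OF i1 m ae])
qed

lemma inner_int: "integrable lborel (\<lambda>x. indicator A x * (\<integral>s. HH lam xi v1 v2 i j t x s \<partial>lborel))"
  using lborel_pair.integrable_fst'[OF G_int] by simp

lemma fubini: "(\<integral>s. (\<integral>x. indicator A x * HH lam xi v1 v2 i j t x s \<partial>lborel) \<partial>lborel)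
   = (\<integral>x. indicator A x * (\<integral>s. HH lam xi v1 v2 i j t x s \<partial>lborel) \<partial>lborel)"
  using lborel_pair.Fubini_integral[of "\<lambda>x s. indicator A x * HH lam xi v1 v2 i j t x s"] G_int
  by simp

lemma outer_int: "integrable lborel (\<lambda>s. \<integral>x. indicator A x * HH lam xi v1 v2 i j t x s \<partial>lborel)"
  using lborel_pair.integrable_snd[of "\<lambda>x s. indicator A x * HH lam xi v1 v2 i j t x s"] G_int
  by simp

lemma D1_meas[measurable]: "D1 lam xi vv t A \<in> borel_measurable lborel"
  unfolding D1_def by measurable

lemma D1_int: "integrable lborel (D1 lam xi vv t A)"
proof (rule Bochner_Integration.integrable_bound[of lborel "indicator {0..t}"])
  show "integrable lborel (indicator {0..t} :: real \<Rightarrow> real)"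
    using t by (intro integrable_real_indicator) auto
  show "D1 lam xi vv t A \<in> borel_measurable lborel" by measurable
  show "AE x in lborel. norm (D1 lam xi vv t A x) \<le> norm (indicator {0..t} x :: real)"
  proof (rule AE_I2)
    fix s :: real
    show "norm (D1 lam xi vv t A s) \<le> norm (indicator {0..t} s :: real)"
    proof (cases "0 < s \<and> s < t")
      case True
      have u: "1 + lam * s \<ge> 1" using True lam by simp
      have e: "exp (- xi * s) \<le> 1" using xi True by simp
      have a: "0 \<le> (indicator A (vv * s) :: real)" "indicator A (vv * s) \<le> (1::real)"
        by (simp_all add: indicator_def)
      have pos: "1 + lam * s > 0" using u by linarith
      have le: "indicator A (vv * s) \<le> 1 + lam * s" using a(2) u by linarith
      have q1: "indicator A (vv * s) / (1 + lam * s) \<le> (1::real)"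
        by (subst divide_le_eq_1_pos[OF pos]) (rule le)
      have q0: "indicator A (vv * s) / (1 + lam * s) \<ge> (0::real)"
        using a u by simp
      define y where "y = exp (- xi * s) * (indicator A (vv * s) / (1 + lam * s))"
      have y1: "y \<le> 1 * 1" unfolding y_def
        using e q0 q1 by (intro mult_mono) auto
      have y0: "y \<ge> 0" unfolding y_def
        by (rule mult_nonneg_nonneg) (simp_all add: q0)
      have D: "D1 lam xi vv t A s = y"
        using True unfolding D1_def y_def by simp
      have I: "indicator {0..t} s = (1::real)" using True by simp
      show ?thesis using y0 y1 by (simp add: D I)
    next
      case False
      then show ?thesis unfolding D1_def by (auto simp: indicator_def)
    qed
  qed
qed

lemma D1_K:
  assumes vv: "vv \<noteq> 0"
  shows "\<bar>1 / vv\<bar> * D1 lam xi vv t A (0 + 1 / vv * x) = indicator A x * KK lam xi vv t x"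
proof (cases "0 < x / vv \<and> x / vv < t")
  case True
  have "lam * (x / vv) > 0" using True lam by (intro mult_pos_pos) auto
  then have u: "1 + lam * (x / vv) > 0" by linarith
  have u2: "1 + lam * x / vv > 0" using u by simp
  have nz: "vv + lam * x \<noteq> 0"
  proof
    assume "vv + lam * x = 0"
    then have "vv * (1 + lam * x / vv) = 0" using vv by (simp add: field_simps)
    then show False using vv u2 by simp
  qed
  show ?thesis
  proof (cases "vv > 0")
    case True
    then show ?thesis using \<open>0 < x / vv \<and> x / vv < t\<close> u2 nz vv unfolding D1_def KK_def
      by (simp add: indicator_def field_simps)
  next
    case False
    then have "vv < 0" using vv by simp
    then show ?thesis using \<open>0 < x / vv \<and> x / vv < t\<close> u2 nz vv unfolding D1_def KK_def
      by (simp add: indicator_def field_simps)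
  qed
next
  case False
  then show ?thesis unfolding D1_def KK_def by (auto simp: indicator_def)
qed

lemma D1_eq:
  assumes vv: "vv \<noteq> 0"
  shows "(\<integral>s. D1 lam xi vv t A s \<partial>lborel) = (\<integral>x. indicator A x * KK lam xi vv t x \<partial>lborel)"
proof -
  have "(\<integral>s. D1 lam xi vv t A s \<partial>lborel) = \<bar>1 / vv\<bar> *\<^sub>R (\<integral>x. D1 lam xi vv t A (0 + 1 / vv * x) \<partial>lborel)"
    using vv by (intro lborel_integral_real_affine) simp
  also have "\<dots> = (\<integral>x. \<bar>1 / vv\<bar> * D1 lam xi vv t A (0 + 1 / vv * x) \<partial>lborel)"
    by simp
  also have "\<dots> = (\<integral>x. indicator A x * KK lam xi vv t x \<partial>lborel)"
    using D1_K[OF vv] by simp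
  finally show ?thesis .
qed

lemma K_int:
  assumes vv: "vv \<noteq> 0"
  shows "integrable lborel (\<lambda>x. indicator A x * KK lam xi vv t x)"
proof -
  have "integrable lborel (\<lambda>x. D1 lam xi vv t A (0 + 1 / vv * x))"
    using vv D1_int by (subst lborel_integrable_real_affine_iff) auto
  then have "integrable lborel (\<lambda>x. \<bar>1 / vv\<bar> * D1 lam xi vv t A (0 + 1 / vv * x))"
    by (rule integrable_mult_right)
  then show ?thesis using D1_K[OF vv] by simp
qed

lemma T_int: "integrable lborel (\<lambda>x. indicator A x * (exp (- xi * t) * (indicator {v2 * t <..< v1 * t} x * FF lam v1 v2 i j x t)))"
proof (rule Bochner_Integration.integrable_bound[of lborel "\<lambda>x. lam / (v1 - v2) * indicator {v2 * t..v1 * t} x"])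
  have "v2 * t \<le> v1 * t" using v t by (simp add: mult_right_mono)
  then show "integrable lborel (\<lambda>x. lam / (v1 - v2) * indicator {v2 * t..v1 * t} x)"
    by (intro integrable_mult_right integrable_real_indicator) auto
  show "(\<lambda>x. indicator A x * (exp (- xi * t) * (indicator {v2 * t <..< v1 * t} x * FF lam v1 v2 i j x t))) \<in> borel_measurable lborel"
    by measurable
  show "AE x in lborel. norm (indicator A x * (exp (- xi * t) * (indicator {v2 * t <..< v1 * t} x * FF lam v1 v2 i j x t)))
       \<le> norm (lam / (v1 - v2) * indicator {v2 * t..v1 * t} x)"
  proof (rule AE_I2)
    fix x :: real
    show "norm (indicator A x * (exp (- xi * t) * (indicator {v2 * t <..< v1 * t} x * FF lam v1 v2 i j x t)))
       \<le> norm (lam / (v1 - v2) * indicator {v2 * t..v1 * t} x)"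
    proof (cases "v2 * t < x \<and> x < v1 * t")
      case True
      have F: "0 \<le> FF lam v1 v2 i j x t" "FF lam v1 v2 i j x t \<le> lam / (v1 - v2)"
        using FF_bound[OF lam v _ ] True t by auto
      have e: "exp (- xi * t) \<le> 1" using xi t by simp
      have "exp (- xi * t) * FF lam v1 v2 i j x t \<le> 1 * (lam / (v1 - v2))"
        using F e by (intro mult_mono) auto
      then have "\<bar>exp (- xi * t) * FF lam v1 v2 i j x t\<bar> \<le> lam / (v1 - v2)"
        using F by simp
      moreover have "\<bar>lam / (v1 - v2)\<bar> = lam / (v1 - v2)" "lam / (v1 - v2) \<ge> 0"
        "\<bar>lam\<bar> = lam" "\<bar>v1 - v2\<bar> = v1 - v2" using lam v by simp_all
      ultimately show ?thesis using True by (simp add: indicator_def abs_mult)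
    next
      case False
      then show ?thesis by (auto simp: indicator_def)
    qed
  qed
qed

lemma decomp:
  assumes vv: "vel v1 v2 j \<noteq> 0"
  shows "subP_reset lam xi v1 v2 i j t A
    = exp (- xi * t) * (if i = j then indicator A (vel v1 v2 j * t) / (1 + lam * t) else 0)
      + (\<integral>x. indicator A x * (exp (- xi * t) * (indicator {v2 * t <..< v1 * t} x * FF lam v1 v2 i j x t)
           + (if i = j then xi * KK lam xi (vel v1 v2 j) t x else 0)
           + xi * (\<integral>s. HH lam xi v1 v2 i j t x s \<partial>lborel)) \<partial>lborel)"
proof -
  let ?T = "\<lambda>x. indicator A x * (exp (- xi * t) * (indicator {v2 * t <..< v1 * t} x * FF lam v1 v2 i j x t))"
  let ?I = "\<lambda>x. indicator A x * (\<integral>s. HH lam xi v1 v2 i j t x s \<partial>lborel)"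
  let ?K = "\<lambda>x. indicator A x * KK lam xi (vel v1 v2 j) t x"
  let ?D = "\<lambda>s. \<integral>x. indicator A x * HH lam xi v1 v2 i j t x s \<partial>lborel"
  have sub: "subP lam v1 v2 i j s A = (if i = j then indicator A (vel v1 v2 j * s) / (1 + lam * s) else 0)
      + (\<integral>x. indicator A x * (indicator {v2 * s <..< v1 * s} x * FF lam v1 v2 i j x s) \<partial>lborel)" for s
    unfolding subP_def set_lebesgue_integral_def FF_def by (simp add: indicator_inter_arith mult.assoc)
  have lb: "(LBINT s=0..t. exp (- xi * s) * subP lam v1 v2 i j s A)
      = (\<integral>s. indicator {0<..<t} s * (exp (- xi * s) * subP lam v1 v2 i j s A) \<partial>lborel)"
  proof -
    have "einterval 0 (ereal t) = {0<..<t}" by (metis einterval_eq_Icc zero_ereal_def)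
    then show ?thesis using t by (simp add: interval_lebesgue_integral_def set_lebesgue_integral_def)
  qed
  have pw: "indicator {0<..<t} s * (exp (- xi * s) * subP lam v1 v2 i j s A)
      = (if i = j then D1 lam xi (vel v1 v2 j) t A s else 0) + ?D s" for s
  proof -
    have eqx: "\<And>x. indicator A x * HH lam xi v1 v2 i j t x s = (indicator {0<..<t} s * exp (- xi * s))
        * (indicator A x * (indicator {v2 * s <..< v1 * s} x * FF lam v1 v2 i j x s))"
      by (simp add: HH_def ac_simps)
    have "?D s = (\<integral>x. (indicator {0<..<t} s * exp (- xi * s))
        * (indicator A x * (indicator {v2 * s <..< v1 * s} x * FF lam v1 v2 i j x s)) \<partial>lborel)"
      by (rule Bochner_Integration.integral_cong) (simp_all add: eqx)
    then have "?D s = (indicator {0<..<t} s * exp (- xi * s))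
        * (\<integral>x. indicator A x * (indicator {v2 * s <..< v1 * s} x * FF lam v1 v2 i j x s) \<partial>lborel)"
      by (simp only: integral_mult_right_zero)
    then show ?thesis unfolding sub D1_def by (simp add: algebra_simps)
  qed
  have L: "(LBINT s=0..t. exp (- xi * s) * subP lam v1 v2 i j s A)
      = (if i = j then integral\<^sup>L lborel ?K else 0) + integral\<^sup>L lborel ?I"
  proof (cases "i = j")
    case True
    have "(LBINT s=0..t. exp (- xi * s) * subP lam v1 v2 i j s A)
        = (\<integral>s. D1 lam xi (vel v1 v2 j) t A s + ?D s \<partial>lborel)"
      unfolding lb pw using True by simp
    also have "\<dots> = (\<integral>s. D1 lam xi (vel v1 v2 j) t A s \<partial>lborel) + integral\<^sup>L lborel ?D"
      by (rule Bochner_Integration.integral_add[OF D1_int outer_int])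
    finally show ?thesis using True D1_eq[OF vv] fubini by simp
  next
    case False
    then show ?thesis unfolding lb pw using fubini by simp
  qed
  have R0: "exp (- xi * t) * subP lam v1 v2 i j t A
      = exp (- xi * t) * (if i = j then indicator A (vel v1 v2 j * t) / (1 + lam * t) else 0) + integral\<^sup>L lborel ?T"
  proof -
    have "integral\<^sup>L lborel ?T = (\<integral>x. exp (- xi * t) * (indicator A x * (indicator {v2 * t <..< v1 * t} x * FF lam v1 v2 i j x t)) \<partial>lborel)"
      by (rule Bochner_Integration.integral_cong) (simp_all add: ac_simps)
    also have "\<dots> = exp (- xi * t) * (\<integral>x. indicator A x * (indicator {v2 * t <..< v1 * t} x * FF lam v1 v2 i j x t) \<partial>lborel)"
      by (rule integral_mult_right_zero)
    finally show ?thesis by (simp only: sub[of t] distrib_left)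
  qed
  have R: "(\<integral>x. indicator A x * (exp (- xi * t) * (indicator {v2 * t <..< v1 * t} x * FF lam v1 v2 i j x t)
           + (if i = j then xi * KK lam xi (vel v1 v2 j) t x else 0)
           + xi * (\<integral>s. HH lam xi v1 v2 i j t x s \<partial>lborel)) \<partial>lborel)
      = integral\<^sup>L lborel ?T + (if i = j then xi * integral\<^sup>L lborel ?K else 0) + xi * integral\<^sup>L lborel ?I"
  proof (cases "i = j")
    case True
    have "(\<integral>x. indicator A x * (exp (- xi * t) * (indicator {v2 * t <..< v1 * t} x * FF lam v1 v2 i j x t)
           + (if i = j then xi * KK lam xi (vel v1 v2 j) t x else 0)
           + xi * (\<integral>s. HH lam xi v1 v2 i j t x s \<partial>lborel)) \<partial>lborel)
        = (\<integral>x. (?T x + xi * ?K x) + xi * ?I x \<partial>lborel)"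
      using True by (simp add: algebra_simps)
    also have "\<dots> = (\<integral>x. ?T x + xi * ?K x \<partial>lborel) + (\<integral>x. xi * ?I x \<partial>lborel)"
      by (intro Bochner_Integration.integral_add Bochner_Integration.integrable_add integrable_mult_right T_int K_int[OF vv] inner_int)
    also have "(\<integral>x. ?T x + xi * ?K x \<partial>lborel) = integral\<^sup>L lborel ?T + (\<integral>x. xi * ?K x \<partial>lborel)"
      by (intro Bochner_Integration.integral_add Bochner_Integration.integrable_add integrable_mult_right T_int K_int[OF vv] inner_int)
    finally show ?thesis using True by simp
  next
    case False
    have "(\<integral>x. indicator A x * (exp (- xi * t) * (indicator {v2 * t <..< v1 * t} x * FF lam v1 v2 i j x t)
           + (if i = j then xi * KK lam xi (vel v1 v2 j) t x else 0)
           + xi * (\<integral>s. HH lam xi v1 v2 i j t x s \<partial>lborel)) \<partial>lborel)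
        = (\<integral>x. ?T x + xi * ?I x \<partial>lborel)"
      using False by (simp add: algebra_simps)
    also have "\<dots> = integral\<^sup>L lborel ?T + (\<integral>x. xi * ?I x \<partial>lborel)"
      by (intro Bochner_Integration.integral_add integrable_mult_right T_int inner_int)
    finally show ?thesis using False by simp
  qed
  show ?thesis unfolding subP_reset_def R0 L R by (simp add: algebra_simps)
qed

end

context
  fixes lam xi v1 v2 t :: real
  assumes lam: "lam > 0" and xi: "xi > 0" and v: "v2 < v1" and v1: "0 < v1" and t: "t > 0"
    and sg: "v2 < 0 \<or> 0 < v2"
begin

definition LL :: "real \<Rightarrow> real" where
  "LL x = (if v2 < 0 then Mx v1 v2 x else x / v1)"
definition UU :: "real \<Rightarrow> real" where
  "UU x = (if v2 < 0 then t else mxt v2 x t)"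

lemma LU:
  assumes x: "v2 * t \<le> x" "x \<le> v1 * t"
  shows "0 \<le> LL x" "LL x \<le> UU x"
    "\<And>s. (0 < s \<and> s < t \<and> v2 * s < x \<and> x < v1 * s) \<longleftrightarrow> (LL x < s \<and> s < UU x)"
    "Ind v1 v2 x t = 1 \<or> LL x = UU x"
proof -
  have a1: "x / v1 < s \<longleftrightarrow> x < v1 * s" for s using v1 by (simp add: pos_divide_less_eq mult.commute)
  have a2: "x / v1 \<le> t" using x v1 by (simp add: pos_divide_le_eq mult.commute)
  have spos: "0 < s" if "v2 * s < x" "x < v1 * s" for s
  proof (rule ccontr)
    assume "\<not> 0 < s"
    then have "s \<le> 0" by simp
    then have "v1 * s \<le> v2 * s" using v by (intro mult_right_mono_neg) simp_all
    then show False using that by simp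
  qed
  consider (neg) "v2 < 0" | (pos) "0 < v2" using sg by auto
  then have "0 \<le> LL x \<and> LL x \<le> UU x \<and> (\<forall>s. (0 < s \<and> s < t \<and> v2 * s < x \<and> x < v1 * s) \<longleftrightarrow> (LL x < s \<and> s < UU x))
     \<and> (Ind v1 v2 x t = 1 \<or> LL x = UU x)"
  proof cases
    case neg
    have b1: "x / v2 < s \<longleftrightarrow> v2 * s < x" for s using neg by (simp add: neg_divide_less_eq mult.commute)
    have b2: "x / v2 \<le> t" using x neg by (simp add: neg_divide_le_eq mult.commute)
    have L: "LL x = max (x / v1) (x / v2)" "UU x = t" using neg by (simp_all add: LL_def UU_def Mx_def)
    have m0: "0 \<le> max (x / v1) (x / v2)"
    proof (cases "x \<ge> 0")
      case True then have "x / v1 \<ge> 0" using v1 by simp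
      then show ?thesis by (simp add: le_max_iff_disj)
    next
      case False then have "x / v2 > 0" using neg by (simp add: divide_neg_neg)
      then show ?thesis by simp
    qed
    have eqv: "\<forall>s. (0 < s \<and> s < t \<and> v2 * s < x \<and> x < v1 * s) \<longleftrightarrow> (max (x / v1) (x / v2) < s \<and> s < t)"
      using a1 b1 m0 spos by auto
    have ind: "Ind v1 v2 x t = 1 \<or> max (x / v1) (x / v2) = t"
    proof (cases "v2 * t < x \<and> x < v1 * t")
      case True
      then have "min (v2 * t) 0 = v2 * t" using neg t by (simp add: mult_neg_pos)
      then show ?thesis using True by (simp add: Ind_def indicator_def)
    next
      case False
      then have "x = v2 * t \<or> x = v1 * t" using x by auto
      then have "x / v2 = t \<or> x / v1 = t" using neg v1 by auto
      then show ?thesis using a2 b2 by auto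
    qed
    show ?thesis unfolding L using m0 a2 b2 eqv ind by auto
  next
    case pos
    have b1: "s < x / v2 \<longleftrightarrow> v2 * s < x" for s using pos by (simp add: pos_less_divide_eq mult.commute)
    have xp: "x > 0" using x pos t by (smt (verit) mult_pos_pos)
    have L: "LL x = x / v1" "UU x = min (x / v2) t" using pos by (simp_all add: LL_def UU_def mxt_def)
    have m0: "0 \<le> x / v1" using xp v1 by simp
    have m1: "x / v1 \<le> x / v2" using xp pos v by (intro divide_left_mono) auto
    have eqv: "\<forall>s. (0 < s \<and> s < t \<and> v2 * s < x \<and> x < v1 * s) \<longleftrightarrow> (x / v1 < s \<and> s < min (x / v2) t)"
      using a1 b1 m0 spos by auto
    have ind: "Ind v1 v2 x t = 1 \<or> x / v1 = min (x / v2) t"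
    proof (cases "x < v1 * t")
      case True
      then have "min (v2 * t) 0 = 0" using pos t by simp
      then show ?thesis using True xp by (simp add: Ind_def indicator_def)
    next
      case False
      then have "x = v1 * t" using x by auto
      then have "x / v1 = t" using v1 by auto
      moreover have "t \<le> x / v2" using m1 \<open>x / v1 = t\<close> by simp
      ultimately show ?thesis by simp
    qed
    show ?thesis unfolding L using m0 m1 a2 eqv ind by auto
  qed
  then show "0 \<le> LL x" "LL x \<le> UU x"
    "\<And>s. (0 < s \<and> s < t \<and> v2 * s < x \<and> x < v1 * s) \<longleftrightarrow> (LL x < s \<and> s < UU x)"
    "Ind v1 v2 x t = 1 \<or> LL x = UU x" by blast+
qed

lemma Theta_eq: "ThetaLX lam xi v1 v2 x t = exp (- xi * LL x) / (1 + lam * LL x) - exp (- xi * UU x) / (1 + lam * UU x)"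
  by (simp add: ThetaLX_def LL_def UU_def)

lemma Gamma_eq: "GammaLX lam xi v1 v2 x t = GammaInc 0 ((LL x + 1 / lam) * xi) ((UU x + 1 / lam) * xi)"
  by (simp add: GammaLX_def LL_def UU_def)

lemma inner_closed:
  assumes x: "v2 * t \<le> x" "x \<le> v1 * t" and ab: "\<And>s. coef lam v1 v2 i j x s = a + b * s"
  shows "(\<integral>s. HH lam xi v1 v2 i j t x s \<partial>lborel)
     = lam / (v1 - v2) * ((a - b / lam) / lam * ThetaLX lam xi v1 v2 x t
        + (b / lam - (a - b / lam) * xi / lam) * (exp (xi / lam) / lam * GammaLX lam xi v1 v2 x t))"
proof -
  note LUx = LU[OF x]
  define g where "g = (\<lambda>s. exp (- xi * s) * (a + b * s) / (1 + lam * s)^2)"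
  have HHeq: "HH lam xi v1 v2 i j t x s = indicator {LL x<..<UU x} s * (lam / (v1 - v2) * g s)" for s
  proof -
    have "HH lam xi v1 v2 i j t x s = (if 0 < s \<and> s < t \<and> v2 * s < x \<and> x < v1 * s then exp (- xi * s) * FF lam v1 v2 i j x s else 0)"
      unfolding HH_def by (auto simp: indicator_def)
    also have "\<dots> = (if LL x < s \<and> s < UU x then exp (- xi * s) * FF lam v1 v2 i j x s else 0)"
      using LUx(3)[of s] by simp
    also have "\<dots> = indicator {LL x<..<UU x} s * (lam / (v1 - v2) * g s)"
      unfolding FF_def g_def ab by (simp add: indicator_def)
    finally show ?thesis .
  qed
  have "(\<integral>s. HH lam xi v1 v2 i j t x s \<partial>lborel) = (\<integral>s. indicator {LL x<..<UU x} s * (lam / (v1 - v2) * g s) \<partial>lborel)"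
    by (simp add: HHeq)
  also have "\<dots> = (LBINT s=LL x..UU x. lam / (v1 - v2) * g s)"
  proof -
    have le: "ereal (LL x) \<le> ereal (UU x)" using LUx(2) by simp
    show ?thesis unfolding interval_lebesgue_integral_def set_lebesgue_integral_def einterval_eq_Icc
      by (simp only: le if_True real_scaleR_def)
  qed
  also have "\<dots> = lam / (v1 - v2) * (LBINT s=LL x..UU x. g s)"
    by (rule interval_lebesgue_integral_mult_right)
  also have "(LBINT s=LL x..UU x. g s) = (a - b / lam) / lam * (exp (- xi * LL x) / (1 + lam * LL x) - exp (- xi * UU x) / (1 + lam * UU x))
       + (b / lam - (a - b / lam) * xi / lam)
         * (exp (xi / lam) / lam * GammaInc 0 ((LL x + 1 / lam) * xi) ((UU x + 1 / lam) * xi))"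
    unfolding g_def by (rule closed_form[OF lam xi LUx(1) LUx(2)])
  finally show ?thesis unfolding Theta_eq Gamma_eq .
qed

lemma Ind_or:
  assumes x: "v2 * t \<le> x" "x \<le> v1 * t"
  shows "Ind v1 v2 x t = 1 \<or> (ThetaLX lam xi v1 v2 x t = 0 \<and> GammaLX lam xi v1 v2 x t = 0)"
  using LU(4)[OF x] unfolding Theta_eq Gamma_eq GammaInc_def by auto


lemma pw_cases:
  assumes x: "v2 * t \<le> x" "x \<le> v1 * t"
    and ab: "\<And>s. coef lam v1 v2 i j x s = a + b * s"
    and Ind1: "Ind v1 v2 x t = 1 \<Longrightarrow> xi * (lam / (v1 - v2) * ((a - b / lam) / lam * Th
        + (b / lam - (a - b / lam) * xi / lam) * (exp (xi / lam) / lam * Ga))) = c1 * Th + c2 * Ga"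
    and Th: "Th = ThetaLX lam xi v1 v2 x t" and Ga: "Ga = GammaLX lam xi v1 v2 x t"
  shows "xi * (\<integral>s. HH lam xi v1 v2 i j t x s \<partial>lborel) = Ind v1 v2 x t * (c1 * Th + c2 * Ga)"
  using Ind_or[OF x] inner_closed[OF x ab] Ind1 unfolding Th Ga by auto

lemma pw_same:
  assumes x: "v2 * t \<le> x" "x \<le> v1 * t" and j: "j \<in> {1, 2}"
  shows "exp (- xi * t) * (indicator {v2 * t <..< v1 * t} x * FF lam v1 v2 j j x t)
      + xi * KK lam xi (vel v1 v2 j) t x + xi * (\<integral>s. HH lam xi v1 v2 j j t x s \<partial>lborel)
      = dens_same lam xi v1 v2 j t x"
proof -
  define Th where "Th = ThetaLX lam xi v1 v2 x t"
  define Ga where "Ga = GammaLX lam xi v1 v2 x t"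
  have D: "v1 - v2 \<noteq> 0" "lam \<noteq> 0" using v lam by auto
  have T: "exp (- xi * t) * (indicator {v2 * t <..< v1 * t} x * FF lam v1 v2 j j x t)
     = indicator {v2 * t<..<v1 * t} x * exp (- xi * t) * lam^2 * tau v1 v2 x t ^ (2 - j) * (t - tau v1 v2 x t) ^ (j - 1)
         / ((v1 - v2) * (1 + lam * t)^2)"
    using j by (auto simp: FF_def coef_def Let_def power2_eq_square mult_ac)
  have K: "xi * KK lam xi (vel v1 v2 j) t x = sgn (vel v1 v2 j) * indicator {0<..<t} (x / vel v1 v2 j) * xi
      * exp (- xi * x / vel v1 v2 j) / (vel v1 v2 j + lam * x)"
    by (simp add: KK_def mult_ac)
  have I: "xi * (\<integral>s. HH lam xi v1 v2 j j t x s \<partial>lborel)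
      = Ind v1 v2 x t * ((-1) ^ (3 - j) * xi * (vel v1 v2 (3 - j) + lam * x) / (v1 - v2)^2 * Th
         + (-1) ^ j * xi * exp (xi / lam) / (v1 - v2)^2 * (vel v1 v2 (3 - j) * (lam + xi) / lam + x * xi) * Ga)"
  proof -
    consider "j = 1" | "j = 2" using j by auto
    then show ?thesis
    proof cases
      case 1
      show ?thesis
      proof (rule pw_cases[OF x _ _ Th_def Ga_def])
        show "coef lam v1 v2 j j x s = lam * x / (v1 - v2) + (- lam * v2 / (v1 - v2)) * s" for s
          using 1 D unfolding coef_def tau_def Let_def by (simp add: divide_simps) (simp add: algebra_simps)
        show "xi * (lam / (v1 - v2) * ((lam * x / (v1 - v2) - - lam * v2 / (v1 - v2) / lam) / lam * Th
          + (- lam * v2 / (v1 - v2) / lam - (lam * x / (v1 - v2) - - lam * v2 / (v1 - v2) / lam) * xi / lam) * (exp (xi / lam) / lam * Ga)))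
          = (-1) ^ (3 - j) * xi * (vel v1 v2 (3 - j) + lam * x) / (v1 - v2)^2 * Th
           + (-1) ^ j * xi * exp (xi / lam) / (v1 - v2)^2 * (vel v1 v2 (3 - j) * (lam + xi) / lam + x * xi) * Ga"
          using 1 D by (simp add: vel_def divide_simps) (simp add: algebra_simps power2_eq_square)
      qed
    next
      case 2
      show ?thesis
      proof (rule pw_cases[OF x _ _ Th_def Ga_def])
        show "coef lam v1 v2 j j x s = - lam * x / (v1 - v2) + (lam * v1 / (v1 - v2)) * s" for s
          using 2 D unfolding coef_def tau_def Let_def by (simp add: divide_simps) (simp add: algebra_simps)
        show "xi * (lam / (v1 - v2) * ((- lam * x / (v1 - v2) - lam * v1 / (v1 - v2) / lam) / lam * Th
          + (lam * v1 / (v1 - v2) / lam - (- lam * x / (v1 - v2) - lam * v1 / (v1 - v2) / lam) * xi / lam) * (exp (xi / lam) / lam * Ga)))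
          = (-1) ^ (3 - j) * xi * (vel v1 v2 (3 - j) + lam * x) / (v1 - v2)^2 * Th
           + (-1) ^ j * xi * exp (xi / lam) / (v1 - v2)^2 * (vel v1 v2 (3 - j) * (lam + xi) / lam + x * xi) * Ga"
          using 2 D by (simp add: vel_def divide_simps) (simp add: algebra_simps power2_eq_square)
      qed
    qed
  qed
  show ?thesis unfolding dens_same_def Let_def T K I Th_def Ga_def by simp
qed

lemma pw_other:
  assumes x: "v2 * t \<le> x" "x \<le> v1 * t" and j: "j \<in> {1, 2}"
  shows "exp (- xi * t) * (indicator {v2 * t <..< v1 * t} x * FF lam v1 v2 (3 - j) j x t)
      + xi * (\<integral>s. HH lam xi v1 v2 (3 - j) j t x s \<partial>lborel)
      = dens_other lam xi v1 v2 j t x"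
proof -
  define Th where "Th = ThetaLX lam xi v1 v2 x t"
  define Ga where "Ga = GammaLX lam xi v1 v2 x t"
  have D: "v1 - v2 \<noteq> 0" "lam \<noteq> 0" using v lam by auto
  have T: "exp (- xi * t) * (indicator {v2 * t <..< v1 * t} x * FF lam v1 v2 (3 - j) j x t)
     = indicator {v2 * t<..<v1 * t} x * exp (- xi * t) * lam
         * (1 + lam * tau v1 v2 x t ^ (j - 1) * (t - tau v1 v2 x t) ^ (2 - j)) / ((v1 - v2) * (1 + lam * t)^2)"
    using j by (auto simp: FF_def coef_def Let_def power2_eq_square mult_ac)
  have I: "xi * (\<integral>s. HH lam xi v1 v2 (3 - j) j t x s \<partial>lborel)
      = Ind v1 v2 x t * ((-1) ^ j * xi * (vel v1 v2 (3 - j) + lam * x) / (v1 - v2)^2 * Th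
         + (-1) ^ (3 - j) * xi * exp (xi / lam) / (v1 - v2)^2
             * (vel v1 v2 j * (lam + xi) / lam + x * xi + (-1) ^ j * xi * (v1 - v2) / lam) * Ga)"
  proof -
    consider "j = 1" | "j = 2" using j by auto
    then show ?thesis
    proof cases
      case 1
      show ?thesis
      proof (rule pw_cases[OF x _ _ Th_def Ga_def])
        show "coef lam v1 v2 (3 - j) j x s = 1 - lam * x / (v1 - v2) + (lam * v1 / (v1 - v2)) * s" for s
          using 1 D unfolding coef_def tau_def Let_def by (simp add: divide_simps) (simp add: algebra_simps)
        show "xi * (lam / (v1 - v2) * ((1 - lam * x / (v1 - v2) - lam * v1 / (v1 - v2) / lam) / lam * Th
          + (lam * v1 / (v1 - v2) / lam - (1 - lam * x / (v1 - v2) - lam * v1 / (v1 - v2) / lam) * xi / lam) * (exp (xi / lam) / lam * Ga)))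
          = (-1) ^ j * xi * (vel v1 v2 (3 - j) + lam * x) / (v1 - v2)^2 * Th
         + (-1) ^ (3 - j) * xi * exp (xi / lam) / (v1 - v2)^2
             * (vel v1 v2 j * (lam + xi) / lam + x * xi + (-1) ^ j * xi * (v1 - v2) / lam) * Ga"
          using 1 D by (simp add: vel_def divide_simps) (simp add: algebra_simps power2_eq_square)
      qed
    next
      case 2
      show ?thesis
      proof (rule pw_cases[OF x _ _ Th_def Ga_def])
        show "coef lam v1 v2 (3 - j) j x s = 1 + lam * x / (v1 - v2) + (- lam * v2 / (v1 - v2)) * s" for s
          using 2 D unfolding coef_def tau_def Let_def by (simp add: divide_simps) (simp add: algebra_simps)
        show "xi * (lam / (v1 - v2) * ((1 + lam * x / (v1 - v2) - - lam * v2 / (v1 - v2) / lam) / lam * Th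
          + (- lam * v2 / (v1 - v2) / lam - (1 + lam * x / (v1 - v2) - - lam * v2 / (v1 - v2) / lam) * xi / lam) * (exp (xi / lam) / lam * Ga)))
          = (-1) ^ j * xi * (vel v1 v2 (3 - j) + lam * x) / (v1 - v2)^2 * Th
         + (-1) ^ (3 - j) * xi * exp (xi / lam) / (v1 - v2)^2
             * (vel v1 v2 j * (lam + xi) / lam + x * xi + (-1) ^ j * xi * (v1 - v2) / lam) * Ga"
          using 2 D by (simp add: vel_def divide_simps) (simp add: algebra_simps power2_eq_square)
      qed
    qed
  qed
  show ?thesis unfolding dens_other_def Let_def T I Th_def Ga_def by simp
qed

end

theorem theorem1:
  fixes lam xi v1 v2 t :: real and j :: nat
  assumes "lam > 0" and "xi > 0" and "v2 < v1"
    and "v2 < 0 \<and> 0 < v1 \<or> 0 < v2"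
    and "t > 0" and "j \<in> {1, 2}"
  shows "\<forall>A \<in> sets borel. A \<subseteq> {v2 * t .. v1 * t} \<longrightarrow>
           subP_reset lam xi v1 v2 j j t A
             = exp (- xi * t) * indicator A (vel v1 v2 j * t) / (1 + lam * t)
               + (\<integral>x\<in>A. dens_same lam xi v1 v2 j t x \<partial>lborel)
         \<and> subP_reset lam xi v1 v2 (3 - j) j t A
             = (\<integral>x\<in>A. dens_other lam xi v1 v2 j t x \<partial>lborel)"
proof (intro ballI impI)
  fix A :: "real set"
  assume A: "A \<in> sets borel" and sub: "A \<subseteq> {v2 * t .. v1 * t}"
  have lam: "lam > 0" and xi: "xi > 0" and v: "v2 < v1" and t: "t > 0" and j: "j \<in> {1, 2}"
    using assms by auto
  have v1: "0 < v1" using assms by auto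
  have sg: "v2 < 0 \<or> 0 < v2" using assms by auto
  have vnz: "vel v1 v2 j \<noteq> 0" using v1 sg by (auto simp: vel_def)
  have ne: "3 - j \<noteq> j" using j by auto
  have S: "subP_reset lam xi v1 v2 j j t A
     = exp (- xi * t) * (if j = j then indicator A (vel v1 v2 j * t) / (1 + lam * t) else 0)
      + (\<integral>x. indicator A x * (exp (- xi * t) * (indicator {v2 * t <..< v1 * t} x * FF lam v1 v2 j j x t)
           + (if j = j then xi * KK lam xi (vel v1 v2 j) t x else 0)
           + xi * (\<integral>s. HH lam xi v1 v2 j j t x s \<partial>lborel)) \<partial>lborel)"
    by (rule decomp[OF lam xi v v1 t A vnz])
  have O: "subP_reset lam xi v1 v2 (3 - j) j t A
     = exp (- xi * t) * (if 3 - j = j then indicator A (vel v1 v2 j * t) / (1 + lam * t) else 0)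
      + (\<integral>x. indicator A x * (exp (- xi * t) * (indicator {v2 * t <..< v1 * t} x * FF lam v1 v2 (3 - j) j x t)
           + (if 3 - j = j then xi * KK lam xi (vel v1 v2 j) t x else 0)
           + xi * (\<integral>s. HH lam xi v1 v2 (3 - j) j t x s \<partial>lborel)) \<partial>lborel)"
    by (rule decomp[OF lam xi v v1 t A vnz])
  have IS: "(\<integral>x. indicator A x * (exp (- xi * t) * (indicator {v2 * t <..< v1 * t} x * FF lam v1 v2 j j x t)
           + (if j = j then xi * KK lam xi (vel v1 v2 j) t x else 0)
           + xi * (\<integral>s. HH lam xi v1 v2 j j t x s \<partial>lborel)) \<partial>lborel)
      = (\<integral>x\<in>A. dens_same lam xi v1 v2 j t x \<partial>lborel)"
    unfolding set_lebesgue_integral_def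
  proof (rule Bochner_Integration.integral_cong)
    fix x
    show "indicator A x * (exp (- xi * t) * (indicator {v2 * t <..< v1 * t} x * FF lam v1 v2 j j x t)
           + (if j = j then xi * KK lam xi (vel v1 v2 j) t x else 0)
           + xi * (\<integral>s. HH lam xi v1 v2 j j t x s \<partial>lborel))
        = indicator A x *\<^sub>R dens_same lam xi v1 v2 j t x"
    proof (cases "x \<in> A")
      case True
      then have "v2 * t \<le> x" "x \<le> v1 * t" using sub by auto
      from pw_same[OF lam xi v v1 t sg this j] show ?thesis using True by simp
    next
      case False
      then show ?thesis by simp
    qed
  qed simp
  have IO: "(\<integral>x. indicator A x * (exp (- xi * t) * (indicator {v2 * t <..< v1 * t} x * FF lam v1 v2 (3 - j) j x t)
           + (if 3 - j = j then xi * KK lam xi (vel v1 v2 j) t x else 0)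
           + xi * (\<integral>s. HH lam xi v1 v2 (3 - j) j t x s \<partial>lborel)) \<partial>lborel)
      = (\<integral>x\<in>A. dens_other lam xi v1 v2 j t x \<partial>lborel)"
    unfolding set_lebesgue_integral_def
  proof (rule Bochner_Integration.integral_cong)
    fix x
    show "indicator A x * (exp (- xi * t) * (indicator {v2 * t <..< v1 * t} x * FF lam v1 v2 (3 - j) j x t)
           + (if 3 - j = j then xi * KK lam xi (vel v1 v2 j) t x else 0)
           + xi * (\<integral>s. HH lam xi v1 v2 (3 - j) j t x s \<partial>lborel))
        = indicator A x *\<^sub>R dens_other lam xi v1 v2 j t x"
    proof (cases "x \<in> A")
      case True
      then have "v2 * t \<le> x" "x \<le> v1 * t" using sub by auto
      from pw_other[OF lam xi v v1 t sg this j] show ?thesis using True ne by simp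
    next
      case False
      then show ?thesis by simp
    qed
  qed simp
  show "subP_reset lam xi v1 v2 j j t A
             = exp (- xi * t) * indicator A (vel v1 v2 j * t) / (1 + lam * t)
               + (\<integral>x\<in>A. dens_same lam xi v1 v2 j t x \<partial>lborel)
         \<and> subP_reset lam xi v1 v2 (3 - j) j t A
             = (\<integral>x\<in>A. dens_other lam xi v1 v2 j t x \<partial>lborel)"
    using S O IS IO ne by simp
qed

end
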